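(* Let $d=2$, $n=1$, and let $\mathcal{M}=\{\mathcal{M}_0,\mathcal{M}_1\}$ be a single-qubit instrument with generalized Pauli fidelities $\tilde\nu_{s,t}$, where $\tilde\nu_{0,1}\neq0$ and $\tilde\nu_{1,0}\neq 0$. Let $r=\tilde\nu_{1,0}/\tilde\nu_{0,1}$ and define the linear map $\mathcal{B}$ on $2\times2$ matrices by $$\mathcal{B}(I)=I,\quad \mathcal{B}(X)=X,\quad \mathcal{B}(Y)=Y,\quad \mathcal{B}(Z)=rZ.$$ Define the transformed instrument $\mathcal{M}'_k=\mathcal{B}\circ\mathcal{M}_k\circ\mathcal{B}^{-1}$ and the transformed initial state $\rho'=\mathcal{B}(\rho)$. Then: 1. $\tilde\nu_{0,1}(\mathcal{M}')=\tilde\nu_{1,0}(\mathcal{M})$ and $\tilde\nu_{1,0}(\mathcal{M}')=\tilde\nu_{0,1}(\mathcal{M})$. 2. For every $m\ge1$ and every $\vec k\in\{0,1\}^m$, $$\operatorname{tr}\big(\hat{\mathcal{M}}'_{k_m}\circ\cdots\circ\hat{\mathcal{M}}'_{k_1}(\rho')\big)=\operatorname{tr}\big(\hat{\mathcal{M}}_{k_m}\circ\cdots\circ\hat{\mathcal{M}}_{k_1}(\rho)\big),$$ where hats denote randomly compiled instruments. That is, the outcome distribution of the instrument benchmarking routine under ideal gates is unchanged. Consequently, no choice of $\vec c$ in the estimators $\kappa(\vec c)=\operatorname{tr}(Z^{-c_1}\rho)\prod_j\tilde\nu_{c_j,c_{j+1}}$ can distinguish $\tilde\nu_{0,1}$ from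 $\tilde\nu_{1,0}$.
   Context: Here $X,Y,Z$ are the Pauli matrices and $I$ is the $2\times2$ identity. Let $\chi_z(j)=(-1)^{zj}$ for $z,j\in\{0,1\}$. A single-qubit instrument $\{\mathcal{M}_0,\mathcal{M}_1\}$ is a pair of completely positive trace-non-increasing maps whose sum is trace preserving. Its generalized Pauli fidelities are $$\tilde\nu_{s,t}(\mathcal{M})=\tfrac12\sum_{k\in\{0,1\}}\chi_k(s-t)\operatorname{tr}\big(Z^t\mathcal{M}_k(Z^s)\big),\qquad s,t\in\{0,1\},$$ and the definition is applied verbatim to any family of linear maps. The randomly compiled version of an instrument is $$\hat{\mathcal{M}}_k=\tfrac18\sum_{a,b,x\in\{0,1\}}\mathcal{X}^x\mathcal{Z}^a\mathcal{M}_{k+x}\mathcal{Z}^b\mathcal{X}^x,$$ where $\mathcal{X}(\rho)=X\rho X$, $\mathcal{Z}(\rho)=Z\rho Z$, and indices are taken mod 2. Under ideal gates, $\operatorname{tr}(\hat{\mathcal{M}}_{k_m}\circ\cdots\circ\hat{\mathcal{M}}_{k_1}(\rho))$ is the probability that the instrument benchmarking routine returns $\vec k$. *)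

theory Defs
  imports "HOL-Analysis.Analysis"
begin

type_synonym qmat = "complex^2^2"

definition Iq :: qmat where "Iq = mat 1"
definition Xq :: qmat where "Xq = (\<chi> i j. if i = j then 0 else 1)"
definition Yq :: qmat where
  "Yq = (\<chi> i j. if i = j then 0 else if i = 0 then - \<i> else \<i>)"
definition Zq :: qmat where "Zq = (\<chi> i j. if i = j then (if i = 0 then 1 else -1) else 0)"

text \<open>Row 0 / column 0 is the computational basis state |0>, so
  Xq = [[0,1],[1,0]], Yq = [[0,-i],[i,0]], Zq = [[1,0],[0,-1]].\<close>

definition cscale :: "complex \<Rightarrow> qmat \<Rightarrow> qmat" where
  "cscale c A = (\<chi> i j. c * A $ i $ j)"

definition adj :: "qmat \<Rightarrow> qmat" where
  "adj A = (\<chi> i j. cnj (A $ j $ i))"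

definition Zpow :: "nat \<Rightarrow> qmat" where "Zpow t = (if t = 0 then Iq else Zq)"
definition Xpow :: "nat \<Rightarrow> qmat" where "Xpow t = (if t = 0 then Iq else Xq)"

definition conj_by :: "qmat \<Rightarrow> qmat \<Rightarrow> qmat" where
  "conj_by U A = U ** A ** adj U"

definition psd :: "qmat \<Rightarrow> bool" where
  "psd A \<longleftrightarrow> (\<forall>v::complex^2. (\<Sum>i\<in>UNIV. cnj (v $ i) * (A *v v) $ i) \<in> \<real> \<and>
                  0 \<le> Re (\<Sum>i\<in>UNIV. cnj (v $ i) * (A *v v) $ i))"

definition qstate :: "qmat \<Rightarrow> bool" where
  "qstate \<rho> \<longleftrightarrow> psd \<rho> \<and> trace \<rho> = 1"

definition completely_positive :: "(qmat \<Rightarrow> qmat) \<Rightarrow> bool" where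
  "completely_positive f \<longleftrightarrow>
     (\<exists>Ks :: qmat list. \<forall>A. f A = sum_list (map (\<lambda>K. K ** A ** adj K) Ks))"

definition trace_nonincreasing :: "(qmat \<Rightarrow> qmat) \<Rightarrow> bool" where
  "trace_nonincreasing f \<longleftrightarrow> (\<forall>A. psd A \<longrightarrow> Re (trace (f A)) \<le> Re (trace A))"

text \<open>A single-qubit instrument with outcomes 0 and 1 (only M 0 and M 1 are used).\<close>
definition instrument :: "(nat \<Rightarrow> qmat \<Rightarrow> qmat) \<Rightarrow> bool" where
  "instrument M \<longleftrightarrow>
     (\<forall>k\<in>{0,1}. completely_positive (M k) \<and> trace_nonincreasing (M k)) \<and>
     (\<forall>A. trace (M 0 A + M 1 A) = trace A)"

definition chi :: "nat \<Rightarrow> int \<Rightarrow> complex" where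
  "chi z j = (-1) ^ (z * nat (j mod 2))"

definition gpf :: "(nat \<Rightarrow> qmat \<Rightarrow> qmat) \<Rightarrow> nat \<Rightarrow> nat \<Rightarrow> complex" where
  "gpf M s t = (1/2) * (\<Sum>k\<in>{0,1::nat}. chi k (int s - int t) * trace (Zpow t ** M k (Zpow s)))"

definition rc :: "(nat \<Rightarrow> qmat \<Rightarrow> qmat) \<Rightarrow> nat \<Rightarrow> qmat \<Rightarrow> qmat" where
  "rc M k A = cscale (1/8) (\<Sum>a\<in>{0,1::nat}. \<Sum>b\<in>{0,1::nat}. \<Sum>x\<in>{0,1::nat}.
      conj_by (Xpow x) (conj_by (Zpow a) (M ((k + x) mod 2) (conj_by (Zpow b) (conj_by (Xpow x) A)))))"

text \<open>Apply M_{k_1}, then M_{k_2}, ..., then M_{k_m} where ks = [k_1,...,k_m].\<close>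
definition run_seq :: "(nat \<Rightarrow> qmat \<Rightarrow> qmat) \<Rightarrow> nat list \<Rightarrow> qmat \<Rightarrow> qmat" where
  "run_seq M ks \<rho> = foldl (\<lambda>\<sigma> k. M k \<sigma>) \<rho> ks"

definition clinear :: "(qmat \<Rightarrow> qmat) \<Rightarrow> bool" where
  "clinear f \<longleftrightarrow> (\<forall>A C. f (A + C) = f A + f C) \<and> (\<forall>c A. f (cscale c A) = cscale c (f A))"

end

theory Submission
  imports Defs
begin
lemma UNIV2: "(UNIV::2 set) = {0,1}"
proof -
  have "(2::2) = 0" by simp
  then show ?thesis using UNIV_2 by (metis insert_commute)
qed
lemma all2: "(\<forall>i::2. P i) \<longleftrightarrow> P 0 \<and> P 1"
proof -
  have "(\<forall>i::2. P i) = (\<forall>i\<in>UNIV. P i)" by simp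
  then show ?thesis by (simp add: UNIV2)
qed
lemma sum2: "sum f (UNIV::2 set) = f 0 + f 1"
  by (simp add: UNIV2)
lemma meq: "(A::qmat) = C \<longleftrightarrow> A$0$0 = C$0$0 \<and> A$0$1 = C$0$1 \<and> A$1$0 = C$1$0 \<and> A$1$1 = C$1$1"
  by (auto simp: vec_eq_iff all2)
lemmas msimps = Iq_def Xq_def Yq_def Zq_def cscale_def adj_def conj_by_def matrix_matrix_mult_def trace_def sum2 mat_def

definition Bf :: "complex \<Rightarrow> qmat \<Rightarrow> qmat" where
  "Bf r A = (\<chi> i j. if i = j then (A$0$0 + A$1$1)/2 + (if i = 0 then r else -r) * (A$0$0 - A$1$1)/2 else A$i$j)"

lemma decomp: "A = cscale ((A$0$0 + A$1$1)/2) Iq + cscale ((A$0$1 + A$1$0)/2) Xq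
   + cscale (\<i> * (A$0$1 - A$1$0)/2) Yq + cscale ((A$0$0 - A$1$1)/2) Zq"
  by (simp add: meq msimps field_simps)

lemma B_eq:
  assumes "clinear B" "B Iq = Iq" "B Xq = Xq" "B Yq = Yq" "B Zq = cscale r Zq"
  shows "B A = Bf r A"
proof -
  have "B A = B (cscale ((A$0$0 + A$1$1)/2) Iq + cscale ((A$0$1 + A$1$0)/2) Xq
   + cscale (\<i> * (A$0$1 - A$1$0)/2) Yq + cscale ((A$0$0 - A$1$1)/2) Zq)"
    using decomp[of A] by simp
  also have "\<dots> = cscale ((A$0$0 + A$1$1)/2) Iq + cscale ((A$0$1 + A$1$0)/2) Xq
   + cscale (\<i> * (A$0$1 - A$1$0)/2) Yq + cscale ((A$0$0 - A$1$1)/2) (cscale r Zq)"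
    using assms unfolding clinear_def by simp
  also have "\<dots> = Bf r A" by (simp add: meq msimps Bf_def field_simps)
  finally show ?thesis .
qed

lemma Bf_inv: "r \<noteq> 0 \<Longrightarrow> Bf (1/r) (Bf r A) = A"
  by (simp add: meq Bf_def field_simps)
lemma Bf_inv2: "r \<noteq> 0 \<Longrightarrow> Bf r (Bf (1/r) A) = A"
  by (simp add: meq Bf_def field_simps)
lemma Bf_trace: "trace (Bf r A) = trace A"
  by (simp add: Bf_def msimps field_simps)
lemma Bf_trZ: "trace (Zq ** Bf r A) = r * trace (Zq ** A)"
  by (simp add: Bf_def msimps field_simps)
lemma Bf_add: "Bf r (A + C) = Bf r A + Bf r C"
  by (simp add: meq Bf_def field_simps)
lemma Bf_cscale: "Bf r (cscale c A) = cscale c (Bf r A)"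
  by (simp add: meq Bf_def msimps field_simps)
lemma Bf_X: "Bf r (conj_by (Xpow x) A) = conj_by (Xpow x) (Bf r A)"
  by (simp add: Xpow_def meq Bf_def msimps field_simps)
lemma Bf_Z: "Bf r (conj_by (Zpow x) A) = conj_by (Zpow x) (Bf r A)"
  by (simp add: Zpow_def meq Bf_def msimps field_simps)
lemma Bf_I: "Bf r Iq = Iq"
  by (simp add: meq Bf_def msimps)
lemma Bf_Zq: "Bf r Zq = cscale r Zq"
  by (simp add: meq Bf_def msimps)

lemma kraus_scale: "sum_list (map (\<lambda>K. K ** cscale c A ** adj K) Ks) = cscale c (sum_list (map (\<lambda>K. K ** A ** adj K) Ks))"
proof (induction Ks)
  case Nil then show ?case by (simp add: meq msimps)
next
  case (Cons K Ks)
  have "K ** cscale c A ** adj K = cscale c (K ** A ** adj K)"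
    by (simp add: meq msimps algebra_simps)
  moreover have "cscale c (P + Q) = cscale c P + cscale c Q" for P Q
    by (simp add: meq msimps algebra_simps)
  ultimately show ?case using Cons by simp
qed

lemma trace_cscale: "trace (cscale c A) = c * trace A"
  by (simp add: msimps algebra_simps)

lemma rc_conj: "rc (\<lambda>k a. Bf r (M k (Bf s a))) k A = Bf r (rc M k (Bf s A))"
  unfolding rc_def by (simp add: Bf_add Bf_cscale Bf_X Bf_Z)

lemma run_conj:
  assumes "r \<noteq> 0"
  shows "run_seq (rc (\<lambda>k. Bf r \<circ> M k \<circ> Bf (1/r))) ks (Bf r \<rho>) = Bf r (run_seq (rc M) ks \<rho>)"
  unfolding run_seq_def
proof (induction ks arbitrary: \<rho>)
  case Nil then show ?case by simp
next
  case (Cons k ks)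
  show ?case using Cons[of "rc M k \<rho>"] by (simp add: rc_conj Bf_inv assms)
qed

theorem mainTheorem6:
  fixes M :: "nat \<Rightarrow> qmat \<Rightarrow> qmat" and \<rho> :: qmat and B :: "qmat \<Rightarrow> qmat" and r :: complex
  assumes instr: "instrument M"
    and state: "qstate \<rho>"
    and nz01: "gpf M 0 1 \<noteq> 0" and nz10: "gpf M 1 0 \<noteq> 0"
    and r_def: "r = gpf M 1 0 / gpf M 0 1"
    and B_lin: "clinear B"
    and BI: "B Iq = Iq" and BX: "B Xq = Xq" and BY: "B Yq = Yq" and BZ: "B Zq = cscale r Zq"
  shows "let M' = (\<lambda>k. B \<circ> M k \<circ> inv B); \<rho>' = B \<rho> in
           gpf M' 0 1 = gpf M 1 0 \<and> gpf M' 1 0 = gpf M 0 1 \<and>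
           (\<forall>ks. length ks \<ge> 1 \<longrightarrow> set ks \<subseteq> {0,1} \<longrightarrow>
              trace (run_seq (rc M') ks \<rho>') = trace (run_seq (rc M) ks \<rho>))"
proof -
  have r0: "r \<noteq> 0" using r_def nz01 nz10 by simp
  have Beq: "B = Bf r" using B_eq[OF B_lin BI BX BY BZ] by (rule ext)
  have injB: "inj B" unfolding Beq
    by (metis Bf_inv r0 injI)
  have invB: "inv B = Bf (1/r)"
  proof
    fix A show "inv B A = Bf (1/r) A"
      by (rule inv_f_eq[OF injB]) (simp add: Beq Bf_inv2 r0)
  qed
  have lin: "M k (cscale c A) = cscale c (M k A)" if "k \<in> {0,1}" for k c A
  proof -
    from instr that obtain Ks where "\<forall>A. M k A = sum_list (map (\<lambda>K. K ** A ** adj K) Ks)"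
      unfolding instrument_def completely_positive_def by blast
    then show ?thesis using kraus_scale by simp
  qed
  have IqL: "Iq ** A = A" for A by (simp add: Iq_def)
  let ?M' = "\<lambda>k. Bf r \<circ> M k \<circ> Bf (1/r)"
  have g1: "gpf ?M' 0 1 = gpf M 1 0"
  proof -
    have "gpf ?M' 0 1 = r * gpf M 0 1"
      by (simp add: gpf_def Zpow_def Bf_I Bf_trZ algebra_simps)
    then show ?thesis using r_def nz01 by simp
  qed
  have g2: "gpf ?M' 1 0 = gpf M 0 1"
  proof -
    have "gpf ?M' 1 0 = (1/r) * gpf M 1 0"
      by (simp add: gpf_def Zpow_def IqL Bf_trace Bf_Zq lin trace_cscale algebra_simps)
    then show ?thesis using r_def nz01 r0 by simp
  qed
  have invB': "inv (Bf r) = Bf (1/r)" using invB Beq by simp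
  show ?thesis unfolding Let_def Beq invB'
    using g1 g2 run_conj[OF r0, of M _ \<rho>] Bf_trace by simp
qed

end
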